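(* For every $d \in \{2,3,4,5,7,8,9,12,16,24,56,72\}$, the sequence $\left(\left\lfloor n^6/d \right\rfloor\right)_{n \ge 1}$ is eventually prime-free.
   Context: A sequence $(a_n)_{n\ge 1}$ of positive integers is called eventually prime-free if there exists an index $n_0$ such that $a_n$ is composite for all $n \ge n_0$. (Here, as in the paper, this is understood as: only finitely many terms $a_n$ are prime.) *)

theory Defs
  imports Complex_Main "HOL-Computational_Algebra.Primes"
begin

definition eventually_prime_free :: "(nat \<Rightarrow> nat) \<Rightarrow> bool" where
  "eventually_prime_free a \<longleftrightarrow> (\<exists>n0. \<forall>n\<ge>n0. n \<ge> 1 \<longrightarrow> \<not> prime (a n))"

end

theory Submission
  imports Defs
begin

lemma not_prime_prod:
  fixes d q A B :: nat
  assumes "d * q = A * B" "A > d" "B > d"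
  shows "\<not> prime q"
proof
  assume p: "prime q"
  then have "q dvd A * B" using assms(1) by (metis dvd_triv_right)
  then have "q dvd A \<or> q dvd B" using p prime_dvd_mult_iff by blast
  then show False
  proof
    assume "q dvd A"
    then obtain k where k: "A = q * k" by auto
    then have "k > 0" using assms(2) by (cases k) auto
    have "q * d = q * (k * B)" using assms(1) k by (simp add: algebra_simps)
    then have dk: "d = k * B" using p by (simp add: prime_gt_0_nat)
    have "B \<le> k * B" using \<open>k > 0\<close> by simp
    then show False using dk assms(3) by linarith
  next
    assume "q dvd B"
    then obtain k where k: "B = q * k" by auto
    then have "k > 0" using assms(3) by (cases k) auto
    have "q * d = q * (k * A)" using assms(1) k by (simp add: algebra_simps)
    then have dk: "d = k * A" using p by (simp add: prime_gt_0_nat)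
    have "A \<le> k * A" using \<open>k > 0\<close> by simp
    then show False using dk assms(2) by linarith
  qed
qed

lemma sq_case:
  fixes n d s :: nat
  assumes "d \<le> 72" "s \<le> 8" "n \<ge> 5" "n ^ 6 mod d = s ^ 2"
  shows "\<not> prime (n ^ 6 div d)"
proof -
  have c: "n ^ 3 \<ge> 125" using assms(3) power_mono[of 5 n 3] by simp
  have "d * (n ^ 6 div d) = n ^ 6 - s ^ 2" using assms(4)
    by (metis add_diff_cancel_right' div_mult_mod_eq mult.commute)
  also have "\<dots> = (n ^ 3 - s) * (n ^ 3 + s)"
  proof -
    have s3: "s \<le> n ^ 3" using c assms(2) by simp
    have s6: "s ^ 2 \<le> n ^ 6" using power_mono[OF s3, of 2] by (simp flip: power_mult)
    have "int (n ^ 6 - s ^ 2) = int n ^ 6 - int s ^ 2" using s6 by (simp add: of_nat_diff)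
    also have "\<dots> = (int n ^ 3 - int s) * (int n ^ 3 + int s)"
      by (simp add: algebra_simps power2_eq_square flip: power_add)
    also have "\<dots> = int ((n ^ 3 - s) * (n ^ 3 + s))" using s3 by (simp add: of_nat_diff)
    finally show ?thesis by linarith
  qed
  finally have eq: "d * (n ^ 6 div d) = (n ^ 3 - s) * (n ^ 3 + s)" .
  have "n ^ 3 - s > d" using c assms(1,2) by linarith
  moreover have "n ^ 3 + s > d" using c assms(1) by linarith
  ultimately show ?thesis using not_prime_prod[OF eq] by blast
qed

lemma cube_case:
  fixes n d :: nat
  assumes "d \<le> 72" "n \<ge> 9" "n ^ 6 mod d = 8"
  shows "\<not> prime (n ^ 6 div d)"
proof -
  have c: "n ^ 2 \<ge> 81" using assms(2) power_mono[of 9 n 2] by simp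
  have "d * (n ^ 6 div d) = n ^ 6 - 8" using assms(3)
    by (metis add_diff_cancel_right' div_mult_mod_eq mult.commute)
  also have "\<dots> = (n ^ 2 - 2) * (n ^ 4 + 2 * n ^ 2 + 4)"
  proof -
    have "n ^ 2 \<le> n ^ 6" using assms(2) by (intro power_increasing) auto
    then have "int (n ^ 6 - 8) = int n ^ 6 - 8" using c
      by (simp add: of_nat_diff)
    also have "\<dots> = (int n ^ 2 - 2) * (int n ^ 4 + 2 * int n ^ 2 + 4)"
      by (simp add: algebra_simps flip: power_add)
    also have "\<dots> = int ((n ^ 2 - 2) * (n ^ 4 + 2 * n ^ 2 + 4))" using c
      by (simp add: of_nat_diff)
    finally show ?thesis by linarith
  qed
  finally have eq: "d * (n ^ 6 div d) = (n ^ 2 - 2) * (n ^ 4 + 2 * n ^ 2 + 4)" .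
  have "n ^ 2 - 2 > d" using c assms(1) by linarith
  moreover have "n ^ 4 + 2 * n ^ 2 + 4 > d" using c assms(1) by linarith
  ultimately show ?thesis using not_prime_prod[OF eq] by blast
qed

fun chk :: "nat \<Rightarrow> nat set \<Rightarrow> nat \<Rightarrow> bool" where
  "chk d S m = (if m = 0 then True else ((m-1)^6 mod d \<in> S \<and> chk d S (m-1)))"
declare chk.simps[simp del]

lemma chk_imp: "chk d S m \<Longrightarrow> k < m \<Longrightarrow> k ^ 6 mod d \<in> S"
proof (induction m)
  case 0 then show ?case by simp
next
  case (Suc m)
  then show ?case by (subst (asm) chk.simps) (auto simp: less_Suc_eq)
qed

lemma res72: "k < 72 \<Longrightarrow> (k::nat) ^ 6 mod 72 \<in> {0,1,9,64}"
  by (rule chk_imp[of _ _ 72]) (simp_all add: chk.simps)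

lemma res56: "k < 56 \<Longrightarrow> (k::nat) ^ 6 mod 56 \<in> {0,1,8,49}"
  by (rule chk_imp[of _ _ 56]) (simp_all add: chk.simps)

lemma res16: "k < 16 \<Longrightarrow> (k::nat) ^ 6 mod 16 \<in> {0,1,9}"
  by (rule chk_imp[of _ _ 16]) (simp_all add: chk.simps)

lemma res5: "k < 5 \<Longrightarrow> (k::nat) ^ 6 mod 5 \<in> {0,1,4}"
  by (rule chk_imp[of _ _ 5]) (simp_all add: chk.simps)

lemma mod_fact:
  fixes d :: nat
  assumes "d \<in> {2,3,4,5,7,8,9,12,16,24,56,72}"
  shows "n ^ 6 mod d \<in> {0,1,4,9,16,49,64,8}"
proof -
  have m72: "n ^ 6 mod 72 \<in> {0,1,9,64}"
  proof -
    have "(n mod 72) ^ 6 mod 72 \<in> {0,1,9,64}" by (rule res72) simp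
    then show ?thesis by (simp only: power_mod)
  qed
  have m56: "n ^ 6 mod 56 \<in> {0,1,8,49}"
  proof -
    have "(n mod 56) ^ 6 mod 56 \<in> {0,1,8,49}" by (rule res56) simp
    then show ?thesis by (simp only: power_mod)
  qed
  have r: "n ^ 6 mod d = (n ^ 6 mod m) mod d" if "d dvd m" for m
    using that by (simp add: mod_mod_cancel)
  have m16: "n ^ 6 mod 16 \<in> {0,1,9}"
  proof -
    have "(n mod 16) ^ 6 mod 16 \<in> {0,1,9}" by (rule res16) simp
    then show ?thesis by (simp only: power_mod)
  qed
  have m5: "n ^ 6 mod 5 \<in> {0,1,4}"
  proof -
    have "(n mod 5) ^ 6 mod 5 \<in> {0,1,4}" by (rule res5) simp
    then show ?thesis by (simp only: power_mod)
  qed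
  have "d \<in> {2,3,4,8,9,12,24,72} \<or> d \<in> {7,56} \<or> d = 16 \<or> d = 5"
    using assms by blast
  then show ?thesis
  proof (elim disjE)
    assume "d = 16" then show ?thesis using m16 by auto
  next
    assume "d = 5" then show ?thesis using m5 by auto
  next
    assume A: "d \<in> {2,3,4,8,9,12,24,72}"
    then have "d dvd 72" by (elim insertE) simp_all
    then have e: "n ^ 6 mod d = (n ^ 6 mod 72) mod d" by (rule r)
    obtain v where v: "v = n ^ 6 mod 72" by blast
    have e': "n ^ 6 mod d = v mod d" using e v by simp
    from m72[folded v] A show ?thesis
      unfolding e' by auto
  next
    assume A: "d \<in> {7,56}"
    then have "d dvd 56" by (elim insertE) simp_all
    then have e: "n ^ 6 mod d = (n ^ 6 mod 56) mod d" by (rule r)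
    obtain v where v: "v = n ^ 6 mod 56" by blast
    have e': "n ^ 6 mod d = v mod d" using e v by simp
    from m56[folded v] A show ?thesis
      unfolding e' by auto
  qed
qed

theorem theorem4:
  fixes d :: nat
  assumes "d \<in> {2,3,4,5,7,8,9,12,16,24,56,72}"
  shows "eventually_prime_free (\<lambda>n. nat \<lfloor>real (n ^ 6) / real d\<rfloor>)"
  unfolding eventually_prime_free_def
proof (intro exI[of _ 9] allI impI)
  fix n :: nat assume n: "n \<ge> 9" "n \<ge> 1"
  have fl: "nat \<lfloor>real (n ^ 6) / real d\<rfloor> = n ^ 6 div d"
    by (metis floor_divide_of_nat_eq nat_int)
  have d72: "d \<le> 72" using assms by auto
  have "n ^ 6 mod d \<in> {0,1,4,9,16,49,64,8}" using mod_fact[OF assms] .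
  then have "\<not> prime (n ^ 6 div d)"
  proof (elim insertE)
    assume "n ^ 6 mod d = 8" then show ?thesis using cube_case d72 n by blast
  next
    assume "n ^ 6 mod d = 0" then show ?thesis using sq_case[OF d72, of 0 n] n by simp
  next
    assume "n ^ 6 mod d = 1" then show ?thesis using sq_case[OF d72, of 1 n] n by simp
  next
    assume "n ^ 6 mod d = 4" then show ?thesis using sq_case[OF d72, of 2 n] n by simp
  next
    assume "n ^ 6 mod d = 9" then show ?thesis using sq_case[OF d72, of 3 n] n by simp
  next
    assume "n ^ 6 mod d = 16" then show ?thesis using sq_case[OF d72, of 4 n] n by simp
  next
    assume "n ^ 6 mod d = 49" then show ?thesis using sq_case[OF d72, of 7 n] n by simp
  next
    assume "n ^ 6 mod d = 64" then show ?thesis using sq_case[OF d72, of 8 n] n by simp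
  qed simp
  then show "\<not> prime (nat \<lfloor>real (n ^ 6) / real d\<rfloor>)" using fl by simp
qed

end
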